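(* Let $d\in\mathbb N$, $H>0$, $\eta>0$, let $R(x)=\sum_{a\in[d]}\log\frac1{x(a)}$ be the log-barrier on $\Delta_d$, let $x'\in\Delta_d$ have all coordinates positive, let $\ell\in\mathbb R^d$ with $\|\ell\|_\infty\le H$, define $F(x)=\eta\langle x,\ell\rangle+D_R(x,x')$ and $x^+=\arg\min_{x\in\Delta_d}F(x)$. If $\eta\le\frac1{8H}$, then for every $a\in[d]$, $$(1-8\eta\|\ell\|_\infty)x'(a)\le x^+(a)\le(1+8\eta\|\ell\|_\infty)x'(a).$$
   Context: $D_R(x,y)=\sum_a\big(\log\frac{y(a)}{x(a)}+\frac{x(a)-y(a)}{y(a)}\big)$ is the Bregman divergence of the log-barrier. *)

theory Defs
  imports Complex_Main
begin

text \<open>Vectors in R^d are functions nat => real, indexed by [d] = {1..d}.\<close>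

definition simplex :: "nat \<Rightarrow> (nat \<Rightarrow> real) set" where
  "simplex d = {x. (\<forall>a\<in>{1..d}. 0 \<le> x a) \<and> (\<Sum>a=1..d. x a) = 1}"

definition inner_d :: "nat \<Rightarrow> (nat \<Rightarrow> real) \<Rightarrow> (nat \<Rightarrow> real) \<Rightarrow> real" where
  "inner_d d x y = (\<Sum>a=1..d. x a * y a)"

definition linf_norm :: "nat \<Rightarrow> (nat \<Rightarrow> real) \<Rightarrow> real" where
  "linf_norm d l = Max (insert 0 ((\<lambda>a. \<bar>l a\<bar>) ` {1..d}))"

definition log_barrier :: "nat \<Rightarrow> (nat \<Rightarrow> real) \<Rightarrow> real" where
  "log_barrier d x = (\<Sum>a=1..d. ln (1 / x a))"

definition breg_logbarrier :: "nat \<Rightarrow> (nat \<Rightarrow> real) \<Rightarrow> (nat \<Rightarrow> real) \<Rightarrow> real" where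
  "breg_logbarrier d x y = (\<Sum>a=1..d. ln (y a / x a) + (x a - y a) / y a)"

end

theory Submission
  imports Defs
begin

lemma stationary:
  fixes d :: nat and \<eta> :: real and x' xp l :: "nat \<Rightarrow> real"
  assumes "\<forall>a\<in>{1..d}. x' a > 0"
    and "xp \<in> simplex d" and "\<forall>a\<in>{1..d}. xp a > 0"
    and min: "\<forall>x\<in>simplex d. (\<forall>a\<in>{1..d}. x a > 0) \<longrightarrow>
        \<eta> * inner_d d xp l + breg_logbarrier d xp x' \<le> \<eta> * inner_d d x l + breg_logbarrier d x x'"
    and ab: "a \<in> {1..d}" "b \<in> {1..d}" "a \<noteq> b"
  shows "\<eta> * l a - 1 / xp a + 1 / x' a = \<eta> * l b - 1 / xp b + 1 / x' b"
proof -
  define g where "g i = \<eta> * l i - 1 / xp i + 1 / x' i" for i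
  define e where "e i = (if i = a then 1 else 0) - (if i = b then 1 else (0::real))" for i
  define \<phi> where "\<phi> t = \<eta> * inner_d d (\<lambda>i. xp i + t * e i) l
       + breg_logbarrier d (\<lambda>i. xp i + t * e i) x'" for t
  have se: "(\<Sum>i=1..d. e i) = 0" using ab unfolding e_def
    by (simp add: sum_subtractf)
  have D: "(\<phi> has_field_derivative (\<Sum>i=1..d. e i * g i)) (at 0)"
  proof -
    have "((\<lambda>t. \<Sum>i=1..d. \<eta> * ((xp i + t * e i) * l i) + (ln (x' i / (xp i + t * e i))
          + (xp i + t * e i - x' i) / x' i)) has_field_derivative (\<Sum>i=1..d. e i * g i)) (at 0)"
    proof (rule DERIV_sum)
      fix i assume i: "i \<in> {1..d}"
      have p: "xp i > 0" "x' i > 0" using assms i by auto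
      show "((\<lambda>t. \<eta> * ((xp i + t * e i) * l i) + (ln (x' i / (xp i + t * e i))
          + (xp i + t * e i - x' i) / x' i)) has_field_derivative e i * g i) (at 0)"
        using p unfolding g_def
        by (auto intro!: derivative_eq_intros simp: field_simps)
    qed
    moreover have "\<phi> = (\<lambda>t. \<Sum>i=1..d. \<eta> * ((xp i + t * e i) * l i) + (ln (x' i / (xp i + t * e i))
          + (xp i + t * e i - x' i) / x' i))"
      unfolding \<phi>_def inner_d_def breg_logbarrier_def
      by (simp add: sum.distrib sum_distrib_left)
    ultimately show ?thesis by simp
  qed
  have "(\<Sum>i=1..d. e i * g i) = 0"
  proof (rule DERIV_local_min[OF D])
    show "0 < min (xp a) (xp b)" using assms ab by auto
    show "\<forall>y. \<bar>0 - y\<bar> < min (xp a) (xp b) \<longrightarrow> \<phi> 0 \<le> \<phi> y"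
    proof (intro allI impI)
      fix t assume t: "\<bar>0 - t\<bar> < min (xp a) (xp b)"
      have pos: "\<forall>i\<in>{1..d}. xp i + t * e i > 0"
        using t assms(3) ab unfolding e_def by auto
      have "(\<Sum>i=1..d. xp i + t * e i) = 1"
        using assms(2) se by (simp add: simplex_def sum.distrib sum_distrib_left[symmetric])
      hence "(\<lambda>i. xp i + t * e i) \<in> simplex d" using pos by (auto simp: simplex_def less_imp_le)
      hence "\<phi> t \<ge> \<eta> * inner_d d xp l + breg_logbarrier d xp x'"
        using bspec[OF min] pos unfolding \<phi>_def by simp
      moreover have "\<phi> 0 = \<eta> * inner_d d xp l + breg_logbarrier d xp x'"
        unfolding \<phi>_def by simp
      ultimately show "\<phi> 0 \<le> \<phi> t" by simp
    qed
  qed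
  moreover have "(\<Sum>i=1..d. e i * g i) = g a - g b"
  proof -
    have "(\<Sum>i=1..d. e i * g i) = (\<Sum>i=1..d. (if i = a then g i else 0)) - (\<Sum>i=1..d. (if i = b then g i else 0))"
    proof -
      have "e i * g i = (if i = a then g i else 0) - (if i = b then g i else 0)" for i
        by (simp add: e_def)
      thus ?thesis by (simp only: sum_subtractf)
    qed
    also have "\<dots> = g a - g b" using ab by simp
    finally show ?thesis .
  qed
  ultimately show ?thesis unfolding g_def by simp
qed

lemma arith_bound:
  fixes x' xp c s :: real
  assumes "0 < x'" "x' \<le> 1" "0 < xp" "1 / xp = 1 / x' + c" "\<bar>c\<bar> \<le> s" "0 \<le> s" "s \<le> 1/4"
  shows "(1 - 4 * s) * x' \<le> xp \<and> xp \<le> (1 + 4 * s) * x'"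
proof -
  define t where "t = x' * c"
  have ts: "\<bar>t\<bar> \<le> s" unfolding t_def using assms
    by (metis abs_mult abs_of_pos mult_le_cancel_right2 order_trans mult_left_le_one_le abs_ge_zero less_imp_le)
  have eq: "xp * (1 + t) = x'" using assms unfolding t_def by (simp add: field_simps)
  have t1: "-s \<le> t" "t \<le> s" using ts by auto
  have u: "(1 + 4*s) * (1 + t) \<ge> 1"
  proof -
    have "(1 + 4*s) * (1 + t) \<ge> (1 + 4*s) * (1 - s)" using t1 assms by (intro mult_left_mono) auto
    moreover have "(1 + 4*s) * (1 - s) \<ge> 1" using assms mult_left_mono[of "4*s" 3 s] by (simp add: algebra_simps)
    ultimately show ?thesis by linarith
  qed
  have l: "(1 - 4*s) * (1 + t) \<le> 1"
  proof -
    have "(1 - 4*s) * (1 + t) \<le> (1 - 4*s) * (1 + s)" using t1 assms by (intro mult_left_mono) auto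
    moreover have "(1 - 4*s) * (1 + s) \<le> 1" using assms by (simp add: algebra_simps)
    ultimately show ?thesis by linarith
  qed
  have "xp \<le> (1 + 4 * s) * x'"
  proof -
    have "xp * 1 \<le> xp * ((1 + 4*s) * (1 + t))" using u assms by (intro mult_left_mono) auto
    moreover have "(1 + 4*s) * x' = xp * ((1 + 4*s) * (1 + t))"
      by (subst eq[symmetric]) (simp add: algebra_simps)
    ultimately show ?thesis by linarith
  qed
  moreover have "(1 - 4 * s) * x' \<le> xp"
  proof -
    have "xp * ((1 - 4*s) * (1 + t)) \<le> xp * 1" using l assms by (intro mult_left_mono) auto
    moreover have "(1 - 4*s) * x' = xp * ((1 - 4*s) * (1 + t))"
      by (subst eq[symmetric]) (simp add: algebra_simps)
    ultimately show ?thesis by linarith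
  qed
  ultimately show ?thesis by simp
qed

theorem lemma16:
  fixes d :: nat and H \<eta> :: real and x' xplus l :: "nat \<Rightarrow> real"
    and F :: "(nat \<Rightarrow> real) \<Rightarrow> real"
  assumes "H > 0" and "\<eta> > 0"
    and "x' \<in> simplex d" and "\<forall>a\<in>{1..d}. x' a > 0"
    and "linf_norm d l \<le> H"
    and "F = (\<lambda>x. \<eta> * inner_d d x l + breg_logbarrier d x x')"
    and "xplus \<in> simplex d" and "\<forall>a\<in>{1..d}. xplus a > 0"
    and "\<forall>x\<in>simplex d. (\<forall>a\<in>{1..d}. x a > 0) \<longrightarrow> F xplus \<le> F x"
    and "\<eta> \<le> 1 / (8 * H)"
  shows "\<forall>a\<in>{1..d}.
           (1 - 8 * \<eta> * linf_norm d l) * x' a \<le> xplus a \<and>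
           xplus a \<le> (1 + 8 * \<eta> * linf_norm d l) * x' a"
proof
  fix a assume a: "a \<in> {1..d}"
  define L where "L = linf_norm d l"
  have Lge: "\<bar>l i\<bar> \<le> L" if "i \<in> {1..d}" for i
    unfolding L_def linf_norm_def using that by (intro Max_ge) auto
  have L0: "0 \<le> L" unfolding L_def linf_norm_def by (intro Max_ge) auto
  have "\<eta> * H \<le> 1/8" using assms(1,10) by (simp add: field_simps)
  hence etaL: "\<eta> * L \<le> 1/8" using assms(2,5) L_def
    by (smt (verit) mult_left_mono)
  define g where "g i = \<eta> * l i - 1 / xplus i + 1 / x' i" for i
  have gc: "g i = g a" if "i \<in> {1..d}" for i
  proof (cases "i = a")
    case False
    show ?thesis unfolding g_def
      by (rule stationary[OF assms(4,7,8) _ that a False]) (use assms(6,9) in simp)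
  qed simp
  define c where "c i = \<eta> * l i - g a" for i
  have rc: "1 / xplus i = 1 / x' i + c i" if "i \<in> {1..d}" for i
    using gc[OF that] unfolding c_def g_def by simp
  have sx: "(\<Sum>i=1..d. xplus i) = (\<Sum>i=1..d. x' i)"
    using assms(3,7) by (simp add: simplex_def)
  have ex1: "\<exists>b\<in>{1..d}. c b \<le> 0"
  proof (rule ccontr)
    assume "\<not> ?thesis"
    hence "\<forall>i\<in>{1..d}. xplus i < x' i" using rc assms(4,8)
      by (smt (verit) frac_less2 divide_less_cancel zero_less_one)
    hence "(\<Sum>i=1..d. xplus i) < (\<Sum>i=1..d. x' i)" using a
      by (intro sum_strict_mono) auto
    thus False using sx by simp
  qed
  have ex2: "\<exists>b\<in>{1..d}. c b \<ge> 0"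
  proof (rule ccontr)
    assume "\<not> ?thesis"
    hence "\<forall>i\<in>{1..d}. xplus i > x' i" using rc assms(4,8)
      by (smt (verit) frac_less2 divide_less_cancel zero_less_one)
    hence "(\<Sum>i=1..d. x' i) < (\<Sum>i=1..d. xplus i)" using a
      by (intro sum_strict_mono) auto
    thus False using sx by simp
  qed
  obtain b1 where b1: "b1 \<in> {1..d}" "c b1 \<le> 0" using ex1 by blast
  obtain b2 where b2: "b2 \<in> {1..d}" "c b2 \<ge> 0" using ex2 by blast
  have "c a - c b1 = \<eta> * (l a - l b1)" "c a - c b2 = \<eta> * (l a - l b2)"
    unfolding c_def by (simp_all add: algebra_simps)
  moreover have "\<eta> * (l a - l b1) \<le> \<eta> * (2 * L)" "\<eta> * (l a - l b2) \<ge> - (\<eta> * (2 * L))"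
    using Lge[OF a] Lge[OF b1(1)] Lge[OF b2(1)] assms(2)
    by (auto intro!: mult_left_mono simp del: mult_minus_right simp: mult_minus_right[symmetric])
  ultimately have cb: "\<bar>c a\<bar> \<le> 2 * (\<eta> * L)" using b1 b2 by auto
  have x'1: "x' a \<le> 1"
  proof -
    have "x' a \<le> (\<Sum>i=1..d. x' i)" using assms(3) a
      by (intro member_le_sum) (auto simp: simplex_def)
    thus ?thesis using assms(3) by (simp add: simplex_def)
  qed
  have "(1 - 4 * (2 * (\<eta> * L))) * x' a \<le> xplus a \<and> xplus a \<le> (1 + 4 * (2 * (\<eta> * L))) * x' a"
    using arith_bound[OF _ x'1 _ rc[OF a] cb] assms(2,4,8) a L0 etaL by auto
  thus "(1 - 8 * \<eta> * linf_norm d l) * x' a \<le> xplus a \<and>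
           xplus a \<le> (1 + 8 * \<eta> * linf_norm d l) * x' a"
    unfolding L_def by (simp add: algebra_simps)
qed

end
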